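(* Let $\{x^k\}$ be generated by the ABP algorithm described in the context and assume (A1)–(A6), (A7'), (A8): (A1) $\mathcal F$ is continuously differentiable; (A2) $C$, $Q$ nonempty closed convex, $z_i^*>-\infty$ for each $i$; (A3) each $f_i$ convex; (A4) $\Omega\ne\emptyset$; (A5) $\lambda_k>0$, $\sum\lambda_k=\infty$, $\sum\lambda_k^2<\infty$; (A6) $0<\underline\alpha\le\alpha_k\le\bar\alpha$, $0<\underline\beta\le\beta_k\le\bar\beta$, $0<\underline\gamma\le\gamma_k\le\bar\gamma$ for all $k$; (A7') $\sigma:=\varphi^*-\varphi_{\mathrm{lb}}\le\varepsilon_0$ for a known constant $\varepsilon_0\ge0$; (A8) $\sup_k\|x^k\|\le B<\infty$. Then for every $x^*\in\Omega$ and all $k\ge0$, $$\|x^{k+1}-x^*\|^2\le\|x^k-x^*\|^2-\frac{2\lambda_k}{\eta_k}\Phi_k+\frac{2\bar\alpha\sigma}{\mu}\lambda_k+\lambda_k^2.$$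
   Context: Let $n,m\ge1$, $\mathcal F=(f_1,\dots,f_m)\colon\mathbb R^n\to\mathbb R^m$, $C\subset\mathbb R^n$, $Q\subset\mathbb R^m$, $Q^+:=Q-\mathbb R^m_+=\{y-u:y\in Q,u\in\mathbb R^m_+\}$; $P_S$ is Euclidean projection onto a nonempty closed convex set $S$. Let $z_i^*:=\inf_{x\in C}f_i(x)$, fix $r$ with $r_i>0$, $\sum r_i=1$. Define $\varphi(x):=\max_ir_i(f_i(x)-z_i^* )$, $H(x):=\tfrac12\mathrm{dist}^2(x,C)$, $G(x):=\tfrac12\mathrm{dist}^2(\mathcal F(x),Q^+)$, $\mathcal S:=\{x:H(x)=0,G(x)=0\}$, $\varphi^*:=\inf_{\mathcal S}\varphi$, $\Omega:=\{x\in\mathcal S:\varphi(x)=\varphi^*\}$, $\varphi_{\mathrm{lb}}:=\inf_C\varphi$. ABP algorithm: given $x^0$, $\mu>0$, positive sequences $\{\alpha_k\},\{\beta_k\},\{\gamma_k\},\{\lambda_k\}$: $p^k:=P_{Q^+}(\mathcal F(x^k))$, $\rho^k:=\mathcal F(x^k)-p^k$, $z^k:=x^k-P_C(x^k)$, $v^k:=J_{\mathcal F}(x^k)^T\rho^k$, $w^k:=r_{i^*}\nabla f_{i^*}(x^k)$ with arbitrary $i^*\in\arg\max_ir_i(f_i(x^k)-z_i^* )$, $\Delta_k:=\varphi(x^k)-\varphi_{\mathrm{lb}}$, $d^k:=\alpha_k\mathbf 1_{\{\Delta_k\ge0\}}w^k+\beta_kz^k+\gamma_kv^k$, $\eta_k:=\max(\mu,\|d^k\|)$,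 $x^{k+1}:=x^k-(\lambda_k/\eta_k)d^k$. Notation: $H_k:=H(x^k)$, $G_k:=G(x^k)$, $\Delta_k^+:=\max(\Delta_k,0)$, $\Phi_k:=\alpha_k\Delta_k^++\beta_kH_k+\gamma_kG_k$. *)

theory Defs
  imports "HOL-Analysis.Analysis"
begin

definition Qplus :: "(real^'m) set \<Rightarrow> (real^'m) set" where
  "Qplus Q = {y - u | y u. y \<in> Q \<and> (\<forall>i. 0 \<le> u $ i)}"

definition zstar :: "(real^'n \<Rightarrow> real^'m) \<Rightarrow> (real^'n) set \<Rightarrow> 'm \<Rightarrow> real" where
  "zstar F C i = Inf ((\<lambda>x. F x $ i) ` C)"

definition phi :: "(real^'n \<Rightarrow> real^'m) \<Rightarrow> (real^'n) set \<Rightarrow> real^'m \<Rightarrow> real^'n \<Rightarrow> real" where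
  "phi F C r x = Max (range (\<lambda>i::'m. r $ i * (F x $ i - zstar F C i)))"

definition Hfun :: "(real^'n) set \<Rightarrow> real^'n \<Rightarrow> real" where
  "Hfun C x = (1/2) * (infdist x C)\<^sup>2"

definition Gfun :: "(real^'n \<Rightarrow> real^'m) \<Rightarrow> (real^'m) set \<Rightarrow> real^'n \<Rightarrow> real" where
  "Gfun F Q x = (1/2) * (infdist (F x) (Qplus Q))\<^sup>2"

definition feas :: "(real^'n \<Rightarrow> real^'m) \<Rightarrow> (real^'n) set \<Rightarrow> (real^'m) set \<Rightarrow> (real^'n) set" where
  "feas F C Q = {x. Hfun C x = 0 \<and> Gfun F Q x = 0}"

definition phistar :: "(real^'n \<Rightarrow> real^'m) \<Rightarrow> (real^'n) set \<Rightarrow> (real^'m) set \<Rightarrow> real^'m \<Rightarrow> real" where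
  "phistar F C Q r = Inf (phi F C r ` feas F C Q)"

definition Omega :: "(real^'n \<Rightarrow> real^'m) \<Rightarrow> (real^'n) set \<Rightarrow> (real^'m) set \<Rightarrow> real^'m \<Rightarrow> (real^'n) set" where
  "Omega F C Q r = {x \<in> feas F C Q. phi F C r x = phistar F C Q r}"

definition philb :: "(real^'n \<Rightarrow> real^'m) \<Rightarrow> (real^'n) set \<Rightarrow> real^'m \<Rightarrow> real" where
  "philb F C r = Inf (phi F C r ` C)"

end

theory Submission
  imports Defs
begin


lemma vi_closest:
  fixes S :: "'a::real_inner set"
  assumes "convex S" "x \<in> S" "y \<in> S" "\<forall>z\<in>S. dist a x \<le> dist a z"
  shows "inner (a - x) (y - x) \<le> 0"
proof (rule ccontr)
  assume "\<not> ?thesis"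
  then obtain u where u: "u>0" "u\<le>1" "dist (x + u *\<^sub>R (y - x)) a < dist x a"
    using closer_point_lemma[of a x y] by auto
  let ?z = "(1 - u) *\<^sub>R x + u *\<^sub>R y"
  have "?z \<in> S"
    using convexD_alt[OF assms(1,2,3), of u] using u by auto
  then show False
    using assms(4)[THEN bspec[where x="?z"]] and u(3)
    by (auto simp: dist_commute algebra_simps)
qed

lemma vi_closure:
  fixes S :: "'a::real_inner set"
  assumes "convex S" "x \<in> S" "y \<in> closure S" "\<forall>z\<in>S. dist a x \<le> dist a z"
  shows "inner (a - x) (y - x) \<le> 0"
proof -
  have "closure S \<subseteq> {y. inner (a - x) (y - x) \<le> 0}"
  proof (rule closure_minimal)
    show "S \<subseteq> {y. inner (a - x) (y - x) \<le> 0}" using vi_closest[OF assms(1,2) _ assms(4)] by auto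
    show "closed {y. inner (a - x) (y - x) \<le> 0}"
      by (intro closed_Collect_le continuous_intros)
  qed
  then show ?thesis using assms(3) by auto
qed

lemma infdist_min:
  assumes "p \<in> A" "\<forall>y\<in>A. dist a p \<le> dist a y"
  shows "infdist a A = dist a p"
proof (rule antisym)
  show "infdist a A \<le> dist a p" using assms infdist_le by auto
  have "A \<noteq> {}" using assms by auto
  then show "dist a p \<le> infdist a A"
    unfolding infdist_notempty[OF \<open>A \<noteq> {}\<close>] by (intro cINF_greatest) (use assms in auto)
qed

lemma lin_expand:
  fixes L :: "(real^'n) \<Rightarrow>\<^sub>L (real^'m)"
  shows "blinfun_apply L h = (\<Sum>j\<in>UNIV. h $ j *\<^sub>R blinfun_apply L (axis j 1))"
proof -
  have "h = (\<Sum>j\<in>UNIV. h $ j *\<^sub>R axis j 1)"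
    using basis_expansion[of h] by (simp add: scalar_mult_eq_scaleR)
  then have "blinfun_apply L h = blinfun_apply L (\<Sum>j\<in>UNIV. h $ j *\<^sub>R axis j 1)" by simp
  also have "\<dots> = (\<Sum>j\<in>UNIV. h $ j *\<^sub>R blinfun_apply L (axis j 1))"
    by (simp add: blinfun.sum_right blinfun.scaleR_right)
  finally show ?thesis .
qed

lemma grad_ineq:
  fixes F :: "real^'n \<Rightarrow> real^'m"
  assumes der: "(F has_derivative blinfun_apply L) (at x)"
    and cvx: "convex_on UNIV (\<lambda>y. F y $ i)"
  shows "F y $ i - F x $ i \<ge> blinfun_apply L (y - x) $ i"
proof -
  define g where "g = (\<lambda>t::real. F (x + t *\<^sub>R (y - x)) $ i)"
  have gc: "convex_on UNIV g"
  proof (rule convex_onI)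
    fix t a b :: real
    assume "0 < t" "t < 1"
    have e: "x + ((1 - t) *\<^sub>R a + t *\<^sub>R b) *\<^sub>R (y - x) = (1 - t) *\<^sub>R (x + a *\<^sub>R (y - x)) + t *\<^sub>R (x + b *\<^sub>R (y - x))"
      by (simp add: algebra_simps)
    show "g ((1 - t) *\<^sub>R a + t *\<^sub>R b) \<le> (1 - t) * g a + t * g b"
      unfolding g_def e using convex_onD[OF cvx, of t] \<open>0 < t\<close> \<open>t < 1\<close> by auto
  qed simp
  have d1: "((\<lambda>t::real. x + t *\<^sub>R (y - x)) has_derivative (\<lambda>t. t *\<^sub>R (y - x))) (at 0)"
    by (auto intro!: derivative_eq_intros)
  have der0: "(F has_derivative blinfun_apply L) (at (x + 0 *\<^sub>R (y - x)))" using der by simp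
  have d2: "((\<lambda>t. F (x + t *\<^sub>R (y - x))) has_derivative (\<lambda>t. blinfun_apply L (t *\<^sub>R (y - x)))) (at 0)"
    using diff_chain_at[OF d1 der0] by (simp add: o_def)
  have d3: "(g has_derivative (\<lambda>t. blinfun_apply L (t *\<^sub>R (y - x)) $ i)) (at 0)"
    unfolding g_def using bounded_linear.has_derivative[OF bounded_linear_vec_nth d2] .
  have "(\<lambda>t. blinfun_apply L (t *\<^sub>R (y - x)) $ i) = (*) (blinfun_apply L (y - x) $ i)"
    by (auto simp: blinfun.scaleR_right)
  then have "(g has_field_derivative (blinfun_apply L (y - x) $ i)) (at 0 within UNIV)"
    using d3 by (simp add: has_field_derivative_def)
  from convex_on_imp_above_tangent[OF gc _ _ _ this, of 1]
  have "g 1 - g 0 \<ge> blinfun_apply L (y - x) $ i" by simp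
  then show ?thesis unfolding g_def by simp
qed

theorem lemma16:
  fixes F :: "real^'n \<Rightarrow> real^'m"
    and F' :: "real^'n \<Rightarrow> ((real^'n) \<Rightarrow>\<^sub>L (real^'m))"
    and C :: "(real^'n) set" and Q :: "(real^'m) set"
    and r :: "real^'m"
    and \<mu> :: real
    and \<alpha> \<beta> \<gamma> lam :: "nat \<Rightarrow> real"
    and alo ahi blo bhi glo ghi eps0 B :: real
    and x :: "nat \<Rightarrow> real^'n" and p :: "nat \<Rightarrow> real^'m" and \<rho> :: "nat \<Rightarrow> real^'m"
    and z v w d :: "nat \<Rightarrow> real^'n" and istar :: "nat \<Rightarrow> 'm"
    and \<Delta> \<eta> :: "nat \<Rightarrow> real"
  assumes r_pos: "\<forall>i. r $ i > 0" and r_sum: "(\<Sum>i\<in>UNIV. r $ i) = 1"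
    \<comment> \<open>(A1)\<close>
    and A1_deriv: "\<forall>y. (F has_derivative blinfun_apply (F' y)) (at y)"
    and A1_cont: "continuous_on UNIV F'"
    \<comment> \<open>(A2)\<close>
    and A2_C: "C \<noteq> {}" "closed C" "convex C"
    and A2_Q: "Q \<noteq> {}" "closed Q" "convex Q"
    and A2_z: "\<forall>i. bdd_below ((\<lambda>y. F y $ i) ` C)"
    \<comment> \<open>(A3)\<close>
    and A3: "\<forall>i. convex_on UNIV (\<lambda>y. F y $ i)"
    \<comment> \<open>(A4)\<close>
    and A4: "Omega F C Q r \<noteq> {}"
    \<comment> \<open>(A5)\<close>
    and A5_pos: "\<forall>k. lam k > 0"
    and A5_div: "\<not> summable lam"
    and A5_sq: "summable (\<lambda>k. (lam k)\<^sup>2)"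
    \<comment> \<open>(A6)\<close>
    and A6_a: "0 < alo" "\<forall>k. alo \<le> \<alpha> k \<and> \<alpha> k \<le> ahi"
    and A6_b: "0 < blo" "\<forall>k. blo \<le> \<beta> k \<and> \<beta> k \<le> bhi"
    and A6_g: "0 < glo" "\<forall>k. glo \<le> \<gamma> k \<and> \<gamma> k \<le> ghi"
    \<comment> \<open>(A7')\<close>
    and A7: "0 \<le> eps0" "phistar F C Q r - philb F C r \<le> eps0"
    \<comment> \<open>(A8)\<close>
    and A8: "\<forall>k. norm (x k) \<le> B"
    \<comment> \<open>ABP algorithm\<close>
    and mu_pos: "\<mu> > 0"
    and ABP_p: "\<forall>k. p k \<in> Qplus Q \<and> (\<forall>y\<in>Qplus Q. dist (F (x k)) (p k) \<le> dist (F (x k)) y)"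
    and ABP_rho: "\<forall>k. \<rho> k = F (x k) - p k"
    and ABP_z: "\<forall>k. z k = x k - closest_point C (x k)"
    and ABP_v: "\<forall>k. v k = (\<chi> j. \<rho> k \<bullet> blinfun_apply (F' (x k)) (axis j 1))"
    and ABP_istar: "\<forall>k. \<forall>i. r $ i * (F (x k) $ i - zstar F C i)
                     \<le> r $ istar k * (F (x k) $ istar k - zstar F C (istar k))"
    and ABP_w: "\<forall>k. w k = r $ istar k *\<^sub>R (\<chi> j. blinfun_apply (F' (x k)) (axis j 1) $ istar k)"
    and ABP_Delta: "\<forall>k. \<Delta> k = phi F C r (x k) - philb F C r"
    and ABP_d: "\<forall>k. d k = (if \<Delta> k \<ge> 0 then \<alpha> k else 0) *\<^sub>R w k + \<beta> k *\<^sub>R z k + \<gamma> k *\<^sub>R v k"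
    and ABP_eta: "\<forall>k. \<eta> k = max \<mu> (norm (d k))"
    and ABP_x: "\<forall>k. x (Suc k) = x k - (lam k / \<eta> k) *\<^sub>R d k"
  shows "\<forall>xs\<in>Omega F C Q r. \<forall>k.
     (norm (x (Suc k) - xs))\<^sup>2 \<le> (norm (x k - xs))\<^sup>2
       - 2 * lam k / \<eta> k * (\<alpha> k * max (\<Delta> k) 0 + \<beta> k * Hfun C (x k) + \<gamma> k * Gfun F Q (x k))
       + 2 * ahi * (phistar F C Q r - philb F C r) / \<mu> * lam k + (lam k)\<^sup>2"
proof (intro ballI allI)
  fix xs k
  assume xsO: "xs \<in> Omega F C Q r"
  define X where "X = x k"
  define L where "L = F' X"
  define h where "h = X - xs"
  define \<sigma> where "\<sigma> = phistar F C Q r - philb F C r"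
  define t where "t = lam k / \<eta> k"
  define \<Phi> where "\<Phi> = \<alpha> k * max (\<Delta> k) 0 + \<beta> k * Hfun C (x k) + \<gamma> k * Gfun F Q (x k)"
  have xsF: "xs \<in> feas F C Q" and phixs: "phi F C r xs = phistar F C Q r"
    using xsO unfolding Omega_def by auto
  have xsC: "xs \<in> C"
    using xsF A2_C in_closed_iff_infdist_zero[of C xs] unfolding feas_def Hfun_def by auto
  have QPne: "Qplus Q \<noteq> {}"
  proof -
    obtain q where "q \<in> Q" using A2_Q by auto
    then have "q - 0 \<in> Qplus Q" unfolding Qplus_def by force
    then show ?thesis by auto
  qed
  have QPcvx: "convex (Qplus Q)"
    unfolding convex_def
  proof (intro ballI allI impI)
    fix a b :: "real^'m" and u v :: real
    assume "a \<in> Qplus Q" "b \<in> Qplus Q" "0 \<le> u" "0 \<le> v" "u + v = 1"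
    then obtain qa ua qb ub where a: "a = qa - ua" "qa \<in> Q" "\<forall>i. 0 \<le> ua $ i"
      and b: "b = qb - ub" "qb \<in> Q" "\<forall>i. 0 \<le> ub $ i"
      unfolding Qplus_def by blast
    have "u *\<^sub>R a + v *\<^sub>R b = (u *\<^sub>R qa + v *\<^sub>R qb) - (u *\<^sub>R ua + v *\<^sub>R ub)"
      unfolding a(1) b(1) by (simp add: algebra_simps)
    moreover have "u *\<^sub>R qa + v *\<^sub>R qb \<in> Q"
      using A2_Q(3) a b \<open>0 \<le> u\<close> \<open>0 \<le> v\<close> \<open>u + v = 1\<close> unfolding convex_def by blast
    moreover have "\<forall>i. 0 \<le> (u *\<^sub>R ua + v *\<^sub>R ub) $ i"
      using a b \<open>0 \<le> u\<close> \<open>0 \<le> v\<close> by simp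
    ultimately show "u *\<^sub>R a + v *\<^sub>R b \<in> Qplus Q" unfolding Qplus_def by blast
  qed
  have xsQ: "F xs \<in> closure (Qplus Q)"
    using xsF in_closure_iff_infdist_zero[OF QPne, of "F xs"] unfolding feas_def Gfun_def by auto
  have pk: "p k \<in> Qplus Q" "\<forall>y\<in>Qplus Q. dist (F X) (p k) \<le> dist (F X) y"
    using ABP_p unfolding X_def by auto
  have rho: "\<rho> k = F X - p k" using ABP_rho X_def by auto
  have VI: "inner (\<rho> k) (y - p k) \<le> 0" if "y \<in> closure (Qplus Q)" for y
    using vi_closure[OF QPcvx pk(1) that pk(2)] rho by simp
  have rho_nn: "0 \<le> \<rho> k $ i" for i
  proof -
    obtain q u where pq: "p k = q - u" "q \<in> Q" "\<forall>i. 0 \<le> u $ i"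
      using pk(1) unfolding Qplus_def by blast
    have "p k - axis i 1 = q - (u + axis i 1)" using pq by simp
    moreover have "\<forall>j. 0 \<le> (u + axis i 1) $ j" using pq by (simp add: axis_def)
    ultimately have "p k - axis i 1 \<in> Qplus Q" using pq unfolding Qplus_def by blast
    then have "inner (\<rho> k) (p k - axis i 1 - p k) \<le> 0" using VI closure_subset by blast
    then show ?thesis by (simp add: inner_axis)
  qed
  have grad: "F X $ i - F xs $ i \<le> blinfun_apply L h $ i" for i
  proof -
    have "blinfun_apply L (xs - X) $ i \<le> F xs $ i - F X $ i"
      using grad_ineq[OF _ A3[rule_format, of i]] A1_deriv unfolding L_def by blast
    moreover have "blinfun_apply L (xs - X) = - blinfun_apply L h"
      unfolding h_def by (metis blinfun.minus_right minus_diff_eq)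
    ultimately show ?thesis by simp
  qed
  have vh: "inner (v k) h = inner (\<rho> k) (blinfun_apply L h)"
  proof -
    have "inner (v k) h = (\<Sum>j\<in>UNIV. (\<rho> k \<bullet> blinfun_apply L (axis j 1)) * h $ j)"
      using ABP_v unfolding L_def X_def by (simp add: inner_vec_def)
    also have "\<dots> = inner (\<rho> k) (\<Sum>j\<in>UNIV. h $ j *\<^sub>R blinfun_apply L (axis j 1))"
      by (simp add: inner_sum_right mult.commute)
    also have "\<dots> = inner (\<rho> k) (blinfun_apply L h)" using lin_expand[of L h] by simp
    finally show ?thesis .
  qed
  have G2: "2 * Gfun F Q (x k) = inner (\<rho> k) (\<rho> k)"
  proof -
    have "infdist (F X) (Qplus Q) = dist (F X) (p k)" using infdist_min[OF pk] .
    then show ?thesis unfolding Gfun_def X_def[symmetric] rho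
      by (simp add: dist_norm power2_norm_eq_inner)
  qed
  have vterm: "inner (v k) h \<ge> 2 * Gfun F Q (x k)"
  proof -
    have "inner (\<rho> k) (F X - F xs) \<le> inner (\<rho> k) (blinfun_apply L h)"
      unfolding inner_vec_def by (intro sum_mono) (simp add: grad rho_nn mult_left_mono)
    moreover have "inner (\<rho> k) (F X - F xs) = inner (\<rho> k) (\<rho> k) - inner (\<rho> k) (F xs - p k)"
    proof -
      have FX: "F X = \<rho> k + p k" using rho by simp
      show ?thesis unfolding FX by (simp add: inner_add_right inner_diff_right)
    qed
    ultimately show ?thesis using VI[OF xsQ] vh G2 by linarith
  qed
  have zterm: "inner (z k) h \<ge> 2 * Hfun C (x k)"
  proof -
    let ?P = "closest_point C X"
    have zk: "z k = X - ?P" using ABP_z X_def by auto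
    have "inner (X - ?P) (xs - ?P) \<le> 0" using closest_point_dot[OF A2_C(3,2) xsC] .
    moreover have "inner (z k) h = inner (X - ?P) (X - ?P) - inner (X - ?P) (xs - ?P)"
      unfolding zk h_def by (simp add: algebra_simps inner_diff_right)
    moreover have "infdist X C = dist X ?P"
      by (rule infdist_min) (use closest_point_exists[OF A2_C(2,1)] in auto)
    then have "2 * Hfun C (x k) = inner (X - ?P) (X - ?P)"
      unfolding Hfun_def X_def[symmetric] by (simp add: dist_norm power2_norm_eq_inner)
    ultimately show ?thesis by linarith
  qed
  let ?i = "istar k"
  let ?g = "\<lambda>y i. r $ i * (F y $ i - zstar F C i)"
  have phiX: "phi F C r X = ?g X ?i"
    unfolding phi_def by (rule Max_eqI) (use ABP_istar X_def in auto)
  have phixs_ge: "?g xs ?i \<le> phi F C r xs"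
    unfolding phi_def by (rule Max_ge) auto
  have wh: "inner (w k) h = r $ ?i * blinfun_apply L h $ ?i"
  proof -
    have "inner (w k) h = r $ ?i * (\<Sum>j\<in>UNIV. (blinfun_apply L (axis j 1) $ ?i) * h $ j)"
      using ABP_w unfolding L_def X_def by (simp add: inner_vec_def sum_distrib_left mult.assoc)
    also have "(\<Sum>j\<in>UNIV. (blinfun_apply L (axis j 1) $ ?i) * h $ j) = blinfun_apply L h $ ?i"
      using lin_expand[of L h] by (simp add: sum_component mult.commute)
    finally show ?thesis .
  qed
  have wterm: "inner (w k) h \<ge> \<Delta> k - \<sigma>"
  proof -
    have "r $ ?i * (F X $ ?i - F xs $ ?i) \<le> r $ ?i * blinfun_apply L h $ ?i"
      using grad r_pos by (simp add: less_imp_le)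
    moreover have "r $ ?i * (F X $ ?i - F xs $ ?i) = ?g X ?i - ?g xs ?i"
      by (simp add: algebra_simps)
    ultimately show ?thesis using wh phiX phixs_ge phixs ABP_Delta X_def \<sigma>_def by auto
  qed
  have phi_nn: "0 \<le> phi F C r y" if "y \<in> C" for y
  proof -
    have "zstar F C ?i \<le> F y $ ?i"
      unfolding zstar_def by (rule cInf_lower) (use that A2_z in auto)
    then have "0 \<le> ?g y ?i" using r_pos by (simp add: less_imp_le)
    also have "\<dots> \<le> phi F C r y" unfolding phi_def by (rule Max_ge) auto
    finally show ?thesis .
  qed
  have feasC: "feas F C Q \<subseteq> C"
    using A2_C in_closed_iff_infdist_zero[of C] unfolding feas_def Hfun_def by auto
  have sig_nn: "0 \<le> \<sigma>"
  proof -
    have "Inf (phi F C r ` C) \<le> Inf (phi F C r ` feas F C Q)"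
      by (rule cInf_superset_mono) (use xsF feasC phi_nn in \<open>auto intro!: bdd_belowI[where m=0]\<close>)
    then show ?thesis unfolding \<sigma>_def phistar_def philb_def by simp
  qed
  have Hnn: "0 \<le> Hfun C (x k)" unfolding Hfun_def by simp
  have Gnn: "0 \<le> Gfun F Q (x k)" unfolding Gfun_def by simp
  have ab: "alo \<le> \<alpha> k" "\<alpha> k \<le> ahi" "blo \<le> \<beta> k" "glo \<le> \<gamma> k" using A6_a A6_b A6_g by auto
  have dh: "inner (d k) h = (if \<Delta> k \<ge> 0 then \<alpha> k else 0) * inner (w k) h + \<beta> k * inner (z k) h + \<gamma> k * inner (v k) h"
    using ABP_d by (simp add: inner_add_left)
  have bz: "\<beta> k * inner (z k) h \<ge> \<beta> k * Hfun C (x k)"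
    using zterm Hnn ab A6_b(1) by (intro mult_left_mono) auto
  have gv: "\<gamma> k * inner (v k) h \<ge> \<gamma> k * Gfun F Q (x k)"
    using vterm Gnn ab A6_g(1) by (intro mult_left_mono) auto
  have aw: "(if \<Delta> k \<ge> 0 then \<alpha> k else 0) * inner (w k) h \<ge> \<alpha> k * max (\<Delta> k) 0 - ahi * \<sigma>"
  proof (cases "\<Delta> k \<ge> 0")
    case True
    have "\<alpha> k * (\<Delta> k - \<sigma>) \<le> \<alpha> k * inner (w k) h" using wterm ab A6_a(1) by (intro mult_left_mono) auto
    moreover have "\<alpha> k * \<sigma> \<le> ahi * \<sigma>" using ab sig_nn by (intro mult_right_mono) auto
    ultimately show ?thesis using True by (simp add: algebra_simps)
  next
    case False
    have "0 \<le> ahi * \<sigma>" using ab A6_a(1) sig_nn by simp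
    then show ?thesis using False by simp
  qed
  have key: "inner (d k) h \<ge> \<Phi> - ahi * \<sigma>"
    using dh bz gv aw unfolding \<Phi>_def by linarith
  have eta: "\<eta> k \<ge> \<mu>" "\<eta> k \<ge> norm (d k)" using ABP_eta by auto
  have etap: "\<eta> k > 0" using eta mu_pos by linarith
  have lp: "lam k > 0" using A5_pos by auto
  have tp: "t > 0" unfolding t_def using etap lp by simp
  have expand: "(norm (x (Suc k) - xs))\<^sup>2 = (norm h)\<^sup>2 - 2 * t * inner (d k) h + t\<^sup>2 * (norm (d k))\<^sup>2"
  proof -
    have e: "x (Suc k) - xs = h - t *\<^sub>R d k" using ABP_x unfolding h_def X_def t_def by simp
    show ?thesis unfolding e power2_norm_eq_inner
      by (simp add: inner_diff_left inner_diff_right inner_commute power2_eq_square algebra_simps)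
  qed
  have sq: "t\<^sup>2 * (norm (d k))\<^sup>2 \<le> (lam k)\<^sup>2"
  proof -
    have "t * norm (d k) \<le> lam k"
      unfolding t_def using eta etap lp by (simp add: divide_simps mult_left_mono)
    then have "(t * norm (d k))\<^sup>2 \<le> (lam k)\<^sup>2" using tp by (intro power_mono) auto
    then show ?thesis by (simp add: power_mult_distrib)
  qed
  have lin: "2 * t * inner (d k) h \<ge> 2 * t * \<Phi> - 2 * ahi * \<sigma> / \<mu> * lam k"
  proof -
    have "2 * t * (\<Phi> - ahi * \<sigma>) \<le> 2 * t * inner (d k) h" using key tp by (intro mult_left_mono) auto
    moreover have "t * (ahi * \<sigma>) \<le> ahi * \<sigma> / \<mu> * lam k"
    proof -
      have "0 \<le> ahi * \<sigma>" using ab A6_a(1) sig_nn by simp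
      moreover have "lam k / \<eta> k \<le> lam k / \<mu>" using eta mu_pos lp by (intro divide_left_mono) auto
      ultimately have "lam k / \<eta> k * (ahi * \<sigma>) \<le> lam k / \<mu> * (ahi * \<sigma>)" by (intro mult_right_mono)
      then show ?thesis unfolding t_def by (simp add: algebra_simps)
    qed
    moreover have "2 * t * (\<Phi> - ahi * \<sigma>) = 2 * t * \<Phi> - 2 * (t * (ahi * \<sigma>))" by (simp add: algebra_simps)
    moreover have "2 * ahi * \<sigma> / \<mu> * lam k = 2 * (ahi * \<sigma> / \<mu> * lam k)" by simp
    ultimately show ?thesis by linarith
  qed
  have "2 * lam k / \<eta> k * \<Phi> = 2 * t * \<Phi>" unfolding t_def by simp
  then show "(norm (x (Suc k) - xs))\<^sup>2 \<le> (norm (x k - xs))\<^sup>2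
       - 2 * lam k / \<eta> k * (\<alpha> k * max (\<Delta> k) 0 + \<beta> k * Hfun C (x k) + \<gamma> k * Gfun F Q (x k))
       + 2 * ahi * (phistar F C Q r - philb F C r) / \<mu> * lam k + (lam k)\<^sup>2"
    using expand sq lin unfolding \<Phi>_def[symmetric] \<sigma>_def[symmetric] h_def X_def by linarith
qed

end
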